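(* For every fixed $d\ge 0$, the class $\mathcal{S}_d$ is monotone and tiny.
   Context: For $d\ge0$, $\mathcal{S}_d$ is the class of all graphs $G$ such that for every integer $k$ with $1000^{10(d+1)}\le k\le |V(G)|$, every $k$-vertex subgraph of $G$ has at most $k-1+k/\ln k$ edges. A class is monotone if closed under isomorphism and under taking subgraphs; it is tiny if it is hereditary (closed under induced subgraphs) and there is a constant $c$ such that for every $n$ it contains at most $c^n$ unlabeled (up to isomorphism) $n$-vertex graphs. *)

theory Defs
  imports Complex_Main
begin

text \<open>A finite simple graph with vertices of type 'a: a pair (V, E) where V is a
finite vertex set and E is a set of 2-element subsets of V.\<close>

type_synonym 'a graph = "'a set \<times> 'a set set"

definition verts :: "'a graph \<Rightarrow> 'a set" where "verts G = fst G"
definition edges :: "'a graph \<Rightarrow> 'a set set" where "edges G = snd G"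

definition wf_graph :: "'a graph \<Rightarrow> bool" where
  "wf_graph G \<longleftrightarrow> finite (verts G) \<and>
     (\<forall>e\<in>edges G. \<exists>u v. e = {u, v} \<and> u \<noteq> v \<and> u \<in> verts G \<and> v \<in> verts G)"

definition subgraph :: "'a graph \<Rightarrow> 'a graph \<Rightarrow> bool" where
  "subgraph H G \<longleftrightarrow> wf_graph H \<and> verts H \<subseteq> verts G \<and> edges H \<subseteq> edges G"

definition induced_subgraph :: "'a graph \<Rightarrow> 'a graph \<Rightarrow> bool" where
  "induced_subgraph H G \<longleftrightarrow> verts H \<subseteq> verts G \<and> edges H = {e \<in> edges G. e \<subseteq> verts H}"

definition graph_iso :: "'a graph \<Rightarrow> 'a graph \<Rightarrow> bool" where
  "graph_iso G H \<longleftrightarrow> (\<exists>f. bij_betw f (verts G) (verts H) \<and> edges H = (\<lambda>e. f ` e) ` edges G)"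

definition S_class :: "nat \<Rightarrow> 'a graph set" where
  "S_class d = {G. wf_graph G \<and>
     (\<forall>k::nat. 1000 ^ (10 * (d + 1)) \<le> k \<and> k \<le> card (verts G) \<longrightarrow>
        (\<forall>H. subgraph H G \<and> card (verts H) = k \<longrightarrow>
           real (card (edges H)) \<le> real k - 1 + real k / ln (real k)))}"

definition monotone_class :: "'a graph set \<Rightarrow> bool" where
  "monotone_class C \<longleftrightarrow>
     (\<forall>G H. G \<in> C \<and> wf_graph H \<and> graph_iso G H \<longrightarrow> H \<in> C) \<and>
     (\<forall>G H. G \<in> C \<and> subgraph H G \<longrightarrow> H \<in> C)"

definition hereditary_class :: "'a graph set \<Rightarrow> bool" where
  "hereditary_class C \<longleftrightarrow> (\<forall>G H. G \<in> C \<and> induced_subgraph H G \<longrightarrow> H \<in> C)"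

text \<open>Number of unlabeled n-vertex graphs in C = number of isomorphism classes.\<close>
definition tiny_class :: "'a graph set \<Rightarrow> bool" where
  "tiny_class C \<longleftrightarrow> hereditary_class C \<and>
     (\<exists>c::real. \<forall>n::nat.
        let Cn = {G \<in> C. card (verts G) = n} in
        finite (Cn // {(G, H). G \<in> Cn \<and> H \<in> Cn \<and> graph_iso G H}) \<and>
        real (card (Cn // {(G, H). G \<in> Cn \<and> H \<in> Cn \<and> graph_iso G H})) \<le> c ^ n)"

end

theory Submission
  imports Defs
begin

fun ex :: "bool list \<Rightarrow> nat list \<Rightarrow> nat \<Rightarrow> (nat \<times> nat) list \<times> nat list \<times> nat" where
  "ex [] st nx = ([], st, nx)"
| "ex (True # w) st nx = (case ex w (nx # st) (Suc nx) of (L, st', nx') \<Rightarrow> ((hd st, nx) # L, st', nx'))"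
| "ex (False # w) st nx = ex w (if length st \<le> 1 then st else tl st) nx"

lemma ex_append:
  "ex (w1 @ w2) st nx = (case ex w1 st nx of (L1, st1, nx1) \<Rightarrow>
      (case ex w2 st1 nx1 of (L2, st2, nx2) \<Rightarrow> (L1 @ L2, st2, nx2)))"
proof (induction w1 arbitrary: st nx)
  case Nil then show ?case by (simp split: prod.split)
next
  case (Cons c w1)
  then show ?case by (cases c) (auto split: prod.split)
qed

lemma ex_inv:
  assumes "\<forall>a\<in>set st. a < nx" "st \<noteq> []" "ex w st nx = (L, st', nx')"
  shows "map snd L = [nx..<nx'] \<and> (\<forall>(a,b)\<in>set L. a < b) \<and> (\<forall>a\<in>set st'. a < nx') \<and> st' \<noteq> [] \<and> nx \<le> nx'"
  using assms
proof (induction w arbitrary: st nx L st' nx')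
  case Nil then show ?case by auto
next
  case (Cons c w)
  show ?case
  proof (cases c)
    case True
    obtain L1 where e: "ex w (nx # st) (Suc nx) = (L1, st', nx')" and L: "L = (hd st, nx) # L1"
      using Cons.prems True by (auto split: prod.splits)
    have "\<forall>a\<in>set (nx # st). a < Suc nx" using Cons.prems by auto
    from Cons.IH[OF this _ e] have IH: "map snd L1 = [Suc nx..<nx'] \<and> (\<forall>(a,b)\<in>set L1. a < b) \<and> (\<forall>a\<in>set st'. a < nx') \<and> st' \<noteq> [] \<and> Suc nx \<le> nx'" by simp
    have "hd st < nx" using Cons.prems by (cases st) auto
    moreover have "[nx..<nx'] = nx # [Suc nx..<nx']" using IH by (simp add: upt_rec)
    ultimately show ?thesis using IH L by auto
  next
    case False
    have e: "ex w (if length st \<le> 1 then st else tl st) nx = (L, st', nx')" using Cons.prems False by simp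
    have "\<forall>a\<in>set (if length st \<le> 1 then st else tl st). a < nx" "(if length st \<le> 1 then st else tl st) \<noteq> []"
      using Cons.prems by (cases st; auto)+
    from Cons.IH[OF this e] show ?thesis .
  qed
qed

definition shf :: "nat \<Rightarrow> nat \<Rightarrow> nat" where "shf j a = (if a \<le> j then a else Suc a)"

lemma ex_shift:
  assumes "j < nx" "st \<noteq> []"
  shows "ex w (map (shf j) st) (shf j nx) = (case ex w st nx of (L, st', nx') \<Rightarrow> (map (map_prod (shf j) (shf j)) L, map (shf j) st', shf j nx'))"
  using assms
proof (induction w arbitrary: st nx)
  case Nil then show ?case by simp
next
  case (Cons c w)
  show ?case
  proof (cases c)
    case True
    have s: "Suc (shf j nx) = shf j (Suc nx)" using Cons.prems by (simp add: shf_def)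
    have h: "hd (map (shf j) st) = shf j (hd st)" using Cons.prems by (cases st) auto
    have "ex w (map (shf j) (nx # st)) (shf j (Suc nx)) = (case ex w (nx # st) (Suc nx) of (L, st', nx') \<Rightarrow> (map (map_prod (shf j) (shf j)) L, map (shf j) st', shf j nx'))"
      using Cons.prems by (intro Cons.IH) auto
    then show ?thesis using True s h by (auto split: prod.splits)
  next
    case False
    have "(if length (map (shf j) st) \<le> 1 then map (shf j) st else tl (map (shf j) st)) = map (shf j) (if length st \<le> 1 then st else tl st)"
      by (cases st) auto
    moreover have "(if length st \<le> 1 then st else tl st) \<noteq> []" using Cons.prems by (cases st) auto
    ultimately show ?thesis using False Cons.prems Cons.IH by simp
  qed
qed

definition T :: "bool list \<Rightarrow> (nat \<times> nat) list" where "T w = fst (ex w [0] 1)"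
definition N :: "bool list \<Rightarrow> nat" where "N w = snd (snd (ex w [0] 1))"

lemma T_N: "map snd (T w) = [1..<N w] \<and> (\<forall>(a,b)\<in>set (T w). a < b)"
  using ex_inv[of "[0]" 1 w] unfolding T_def N_def by (cases "ex w [0] 1") auto

lemma ex_snoc_N: "N (w @ [c]) \<le> Suc (N w)" 
  unfolding N_def ex_append by (cases c) (auto split: prod.splits)

lemma prefix_exists:
  assumes "j < N w"
  shows "\<exists>w1 w2 L1 st1. w = w1 @ w2 \<and> ex w1 [0] 1 = (L1, st1, Suc j) \<and> st1 \<noteq> [] \<and> hd st1 = j \<and> (\<forall>a\<in>set st1. a \<le> j)"
  using assms
proof (induction w rule: rev_induct)
  case Nil
  then show ?case by (auto simp: N_def)
next
  case (snoc c w)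
  show ?case
  proof (cases "j < N w")
    case True
    then obtain w1 w2 L1 st1 where "w = w1 @ w2" "ex w1 [0] 1 = (L1, st1, Suc j)" "st1 \<noteq> []" "hd st1 = j" "\<forall>a\<in>set st1. a \<le> j"
      using snoc.IH by blast
    then show ?thesis by (intro exI[of _ w1] exI[of _ "w2 @ [c]"]) auto
  next
    case False
    obtain L st nx where e: "ex w [0] 1 = (L, st, nx)" by (cases "ex w [0] 1") auto
    have nx: "nx = N w" using e by (simp add: N_def)
    from ex_inv[OF _ _ e] have inv: "\<forall>a\<in>set st. a < nx" "st \<noteq> []" by auto
    have "c = True"
    proof (rule ccontr)
      assume "c \<noteq> True"
      then have "N (w @ [c]) = N w" unfolding N_def ex_append using e inv by (auto split: prod.splits)
      then show False using snoc.prems False by simp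
    qed
    then have "N (w @ [c]) = Suc (N w)" unfolding N_def ex_append using e by (auto split: prod.splits)
    then have j: "j = N w" using snoc.prems False by simp
    have "ex (w @ [True]) [0] 1 = (L @ [(hd st, nx)], nx # st, Suc nx)"
      unfolding ex_append using e by simp
    then show ?thesis using \<open>c = True\<close> j nx inv
      by (intro exI[of _ "w @ [True]"] exI[of _ "[]"] exI[of _ "L @ [(hd st, nx)]"] exI[of _ "nx # st"]) auto
  qed
qed

lemma insertion:
  assumes "j < N w"
  shows "\<exists>w'. length w' = length w + 2 \<and> N w' = Suc (N w) \<and>
     set (T w') = map_prod (shf j) (shf j) ` set (T w) \<union> {(j, Suc j)}"
proof -
  obtain w1 w2 L1 st1 where w: "w = w1 @ w2" and e1: "ex w1 [0] 1 = (L1, st1, Suc j)"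
    and st1: "st1 \<noteq> []" "hd st1 = j" "\<forall>a\<in>set st1. a \<le> j"
    using prefix_exists[OF assms] by blast
  have i1: "map snd L1 = [1..<Suc j] \<and> (\<forall>(a,b)\<in>set L1. a < b)"
    using ex_inv[OF _ _ e1] by simp
  have L1: "\<forall>(a,b)\<in>set L1. a \<le> j \<and> b \<le> j"
  proof (intro ballI, clarify)
    fix a b assume ab: "(a, b) \<in> set L1"
    then have "b \<in> set (map snd L1)" by force
    then have "b \<in> set [1..<Suc j]" using i1 by metis
    then have "b \<le> j" by (simp only: set_upt atLeastLessThan_iff) linarith
    moreover have "a < b" using ab i1 by blast
    ultimately show "a \<le> j \<and> b \<le> j" by simp
  qed
  obtain L2 st2 nx2 where e2: "ex w2 st1 (Suc j) = (L2, st2, nx2)" by (cases "ex w2 st1 (Suc j)") auto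
  have mst: "map (shf j) st1 = st1" using st1(3) by (intro map_idI) (auto simp: shf_def)
  have sj: "shf j (Suc j) = Suc (Suc j)" by (simp add: shf_def)
  have e2': "ex w2 st1 (Suc (Suc j)) = (map (map_prod (shf j) (shf j)) L2, map (shf j) st2, shf j nx2)"
    using ex_shift[of j "Suc j" st1 w2] st1 e2 mst sj by simp
  have "\<forall>a\<in>set st1. a < Suc j" using st1 by auto
  from ex_inv[OF this st1(1) e2] have inv2: "Suc j \<le> nx2" by blast
  define w' where "w' = w1 @ [True, False] @ w2"
  have ew': "ex w' [0] 1 = (L1 @ [(j, Suc j)] @ map (map_prod (shf j) (shf j)) L2, map (shf j) st2, shf j nx2)"
    unfolding w'_def ex_append using e1 e2' st1 by (cases st1) auto
  have ew: "ex w [0] 1 = (L1 @ L2, st2, nx2)" unfolding w ex_append using e1 e2 by simp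
  have "map_prod (shf j) (shf j) ` set L1 = set L1"
  proof -
    have "\<forall>x\<in>set L1. map_prod (shf j) (shf j) x = x" using L1 by (auto simp: shf_def)
    then show ?thesis by (metis (no_types, lifting) image_cong image_ident)
  qed
  then have "set (T w') = map_prod (shf j) (shf j) ` set (T w) \<union> {(j, Suc j)}"
    using ew ew' unfolding T_def by (simp add: image_Un Un_commute Un_left_commute Un_assoc)
  moreover have "N w' = Suc (N w)" using ew ew' inv2 unfolding N_def by (simp add: shf_def)
  moreover have "length w' = length w + 2" unfolding w'_def w by simp
  ultimately show ?thesis by blast
qed

inductive grown :: "'a set set \<Rightarrow> 'a \<Rightarrow> 'a set \<Rightarrow> bool" for E r where
  g0: "grown E r {r}"
| gS: "grown E r S \<Longrightarrow> y \<in> S \<Longrightarrow> x \<notin> S \<Longrightarrow> {x, y} \<in> E \<Longrightarrow> grown E r (insert x S)"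

lemma shf_img:
  assumes "j < s"
  shows "{0..<Suc s} = insert (Suc j) (shf j ` {0..<s})"
proof (rule set_eqI)
  fix i
  show "i \<in> {0..<Suc s} \<longleftrightarrow> i \<in> insert (Suc j) (shf j ` {0..<s})"
  proof
    assume i: "i \<in> {0..<Suc s}"
    show "i \<in> insert (Suc j) (shf j ` {0..<s})"
    proof (cases "i \<le> j")
      case True
      then have "i = shf j i" by (simp add: shf_def)
      then have "i \<in> shf j ` {0..<s}" using True assms by (intro image_eqI[of _ _ i]) auto
      then show ?thesis by simp
    next
      case False
      show ?thesis
      proof (cases "i = Suc j")
        case True then show ?thesis by simp
      next
        case F2: False
        then have "i = shf j (i - 1)" "i - 1 \<in> {0..<s}" using False i by (auto simp: shf_def)
        then show ?thesis by blast
      qed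
    qed
  next
    assume "i \<in> insert (Suc j) (shf j ` {0..<s})"
    then show "i \<in> {0..<Suc s}" using assms by (auto simp: shf_def)
  qed
qed

lemma grown_code:
  assumes "grown E r S"
  shows "finite S \<and> r \<in> S \<and> (\<exists>w \<phi>. length w \<le> 2 * card S \<and> N w = card S \<and> bij_betw \<phi> {0..<card S} S \<and>
           (\<forall>(a,b)\<in>set (T w). {\<phi> a, \<phi> b} \<in> E))"
  using assms
proof (induction rule: grown.induct)
  case g0
  have "N [] = 1" "T [] = []" by (simp_all add: N_def T_def)
  moreover have "bij_betw (\<lambda>_. r) {0..<(1::nat)} {r}" by (auto simp: bij_betw_def inj_on_def)
  ultimately show ?case by (intro conjI exI[of _ "[]"] exI[of _ "\<lambda>_. r"]) auto
next
  case (gS S y x)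
  from gS.IH obtain w \<phi> where fin: "finite S" and rS: "r \<in> S" and lw: "length w \<le> 2 * card S" and Nw: "N w = card S"
    and bij: "bij_betw \<phi> {0..<card S} S" and ed: "\<forall>(a,b)\<in>set (T w). {\<phi> a, \<phi> b} \<in> E" by blast
  define s where "s = card S"
  obtain j where j: "j < s" "\<phi> j = y" using bij gS.hyps(2) unfolding s_def bij_betw_def by (metis atLeastLessThan_iff imageE)
  obtain w' where lw': "length w' = length w + 2" and Nw': "N w' = Suc (N w)"
    and Tw': "set (T w') = map_prod (shf j) (shf j) ` set (T w) \<union> {(j, Suc j)}"
    using insertion[of j w] j Nw s_def by auto
  define \<psi> where "\<psi> i = (if i \<le> j then \<phi> i else if i = Suc j then x else \<phi> (i - 1))" for i
  have psh: "\<psi> (shf j a) = \<phi> a" for a unfolding \<psi>_def shf_def by auto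
  have cs: "card (insert x S) = Suc s" using fin gS.hyps(3) s_def by simp
  have img: "\<psi> ` {0..<Suc s} = insert x S"
  proof -
    have "\<psi> ` {0..<Suc s} = insert (\<psi> (Suc j)) (\<psi> ` shf j ` {0..<s})" using shf_img[OF j(1)] by simp
    also have "\<psi> ` shf j ` {0..<s} = \<phi> ` {0..<s}" by (simp add: image_image psh)
    also have "\<dots> = S" using bij s_def by (simp add: bij_betw_def)
    finally show ?thesis by (simp add: \<psi>_def)
  qed
  have bij': "bij_betw \<psi> {0..<card (insert x S)} (insert x S)"
  proof -
    have "card (\<psi> ` {0..<Suc s}) = card {0..<Suc s}" using img cs by simp
    then have "inj_on \<psi> {0..<Suc s}" by (intro eq_card_imp_inj_on) auto
    then show ?thesis unfolding bij_betw_def cs using img by simp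
  qed
  have ed': "\<forall>(a,b)\<in>set (T w'). {\<psi> a, \<psi> b} \<in> E"
  proof
    fix p assume "p \<in> set (T w')"
    then consider "p = (j, Suc j)" | a b where "(a,b) \<in> set (T w)" "p = (shf j a, shf j b)" using Tw' by auto
    then show "case p of (a,b) \<Rightarrow> {\<psi> a, \<psi> b} \<in> E"
    proof cases
      case 1 then show ?thesis using j gS.hyps(4) by (auto simp: \<psi>_def insert_commute)
    next
      case 2 then show ?thesis using ed psh by auto
    qed
  qed
  show ?case using fin rS lw lw' Nw Nw' cs s_def bij' ed'
    by (intro conjI exI[of _ w'] exI[of _ \<psi>]) auto
qed

definition adj :: "'a set set \<Rightarrow> ('a \<times> 'a) set" where "adj E = {(u,v). {u,v} \<in> E}"
definition comp :: "'a set set \<Rightarrow> 'a \<Rightarrow> 'a set" where "comp E r = {v. (r,v) \<in> (adj E)\<^sup>*}"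

lemma adj_sym: "(u,v) \<in> adj E \<Longrightarrow> (v,u) \<in> adj E"
  by (simp add: adj_def insert_commute)

lemma grown_sub: "grown E r S \<Longrightarrow> S \<subseteq> comp E r"
proof (induction rule: grown.induct)
  case g0 then show ?case by (simp add: comp_def)
next
  case (gS S y x)
  have "(y, x) \<in> adj E" using gS.hyps(4) by (simp add: adj_def insert_commute)
  moreover have "(r, y) \<in> (adj E)\<^sup>*" using gS.IH gS.hyps(2) unfolding comp_def by auto
  ultimately have "(r, x) \<in> (adj E)\<^sup>*" by (meson rtrancl.rtrancl_into_rtrancl)
  then show ?case using gS.IH by (simp add: comp_def)
qed

lemma exit_lemma:
  assumes "(r, v) \<in> R\<^sup>*" "r \<in> S" "v \<notin> S"
  shows "\<exists>a b. a \<in> S \<and> b \<notin> S \<and> (a, b) \<in> R \<and> (r, b) \<in> R\<^sup>*"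
  using assms
proof (induction rule: rtrancl_induct)
  case base then show ?case by simp
next
  case (step y z)
  show ?case
  proof (cases "y \<in> S")
    case True then show ?thesis using step by (meson rtrancl.rtrancl_into_rtrancl)
  next
    case False then show ?thesis using step by blast
  qed
qed

lemma comp_sub:
  assumes "\<forall>e\<in>E. e \<subseteq> V" "r \<in> V"
  shows "comp E r \<subseteq> V"
proof
  fix v assume "v \<in> comp E r"
  then have "(r, v) \<in> (adj E)\<^sup>*" by (simp add: comp_def)
  then show "v \<in> V"
  proof (induction rule: rtrancl_induct)
    case base then show ?case using assms by simp
  next
    case (step y z) then show ?case using assms(1) by (auto simp: adj_def)
  qed
qed

lemma grown_comp:
  assumes "finite (comp E r)"
  shows "grown E r (comp E r)"
proof -
  let ?C = "comp E r"
  have "\<forall>S. grown E r S \<and> card ?C - card S = n \<longrightarrow> grown E r ?C" for n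
  proof (induction n)
    case 0
    show ?case
    proof (intro allI impI)
      fix S assume a: "grown E r S \<and> card ?C - card S = 0"
      then have "S \<subseteq> ?C" using grown_sub[OF conjunct1[OF a]] by simp
      then have "S = ?C" using a assms by (metis card_seteq diff_is_0_eq)
      then show "grown E r ?C" using a by simp
    qed
  next
    case (Suc n)
    show ?case
    proof (intro allI impI)
      fix S assume a: "grown E r S \<and> card ?C - card S = Suc n"
      have sub: "S \<subseteq> ?C" using grown_sub[OF conjunct1[OF a]] by simp
      have "S \<noteq> ?C" using a by auto
      then obtain v where v: "v \<in> ?C" "v \<notin> S" using sub by blast
      have rS: "r \<in> S" using grown_code[OF conjunct1[OF a]] by blast
      obtain p q where pq: "p \<in> S" "q \<notin> S" "(p, q) \<in> adj E" "(r, q) \<in> (adj E)\<^sup>*"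
        using exit_lemma[of r v "adj E" S] v rS by (auto simp: comp_def)
      have "{q, p} \<in> E" using pq(3) by (simp add: adj_def insert_commute)
      then have g: "grown E r (insert q S)" using gS[of E r S p q] a pq(1,2) by blast
      have "q \<in> ?C" using pq by (simp add: comp_def)
      have fS: "finite S" using sub assms finite_subset by blast
      have ci: "card (insert q S) = Suc (card S)" using fS pq(2) by simp
      have "card S \<le> card ?C" using sub assms card_mono by blast
      then have "card ?C - card (insert q S) = n" using a ci by linarith
      then show "grown E r ?C" using Suc.IH g by blast
    qed
  qed
  then show ?thesis using grown.g0[of E r] by blast
qed

definition KK :: "nat \<Rightarrow> nat" where "KK d = 1000 ^ (10 * (d + 1))"
definition gb :: "nat \<Rightarrow> nat \<Rightarrow> nat" where
  "gb d s = (if s < KK d then s * s else nat \<lfloor>real s / ln (real s)\<rfloor>)"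
definition Code :: "nat \<Rightarrow> nat \<Rightarrow> (bool list \<times> (nat \<times> nat) set) set" where
  "Code d s = {(w, A). length w \<le> 2 * s \<and> A \<subseteq> {0..<s} \<times> {0..<s} \<and> card A \<le> gb d s}"
definition valid :: "nat \<Rightarrow> (nat \<times> bool list \<times> (nat \<times> nat) set) list \<Rightarrow> bool" where
  "valid d cl = (\<forall>(s,w,A)\<in>set cl. 1 \<le> s \<and> (w, A) \<in> Code d s)"
definition CLs :: "nat \<Rightarrow> nat \<Rightarrow> (nat \<times> bool list \<times> (nat \<times> nat) set) list set" where
  "CLs d n = {cl. valid d cl \<and> sum_list (map fst cl) = n}"

definition cedges :: "bool list \<Rightarrow> (nat \<times> nat) set \<Rightarrow> nat set set" where
  "cedges w A = (\<lambda>(a,b). {a,b}) ` (set (T w) \<union> A)"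

fun decL :: "(nat \<times> bool list \<times> (nat \<times> nat) set) list \<Rightarrow> nat graph" where
  "decL [] = ({}, {})"
| "decL ((s,w,A) # cl) = ({0..<s} \<union> (+) s ` fst (decL cl), cedges w A \<union> (\<lambda>e. (+) s ` e) ` snd (decL cl))"

definition iso2 :: "'a graph \<Rightarrow> nat graph \<Rightarrow> bool" where
  "iso2 G H \<longleftrightarrow> (\<exists>f. bij_betw f (verts H) (verts G) \<and> edges G = (\<lambda>e. f ` e) ` edges H) \<and> (\<forall>e\<in>edges H. e \<subseteq> verts H)"

lemma subgraph_trans: "subgraph H G \<Longrightarrow> subgraph H' H \<Longrightarrow> subgraph H' G"
  unfolding subgraph_def by blast

lemma S_boundD:
  assumes "G \<in> S_class d" "1000 ^ (10 * (d + 1)) \<le> card (verts H)" "card (verts H) \<le> card (verts G)" "subgraph H G"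
  shows "real (card (edges H)) \<le> real (card (verts H)) - 1 + real (card (verts H)) / ln (real (card (verts H)))"
proof -
  have "\<forall>k::nat. 1000 ^ (10 * (d + 1)) \<le> k \<and> k \<le> card (verts G) \<longrightarrow>
        (\<forall>H. subgraph H G \<and> card (verts H) = k \<longrightarrow>
           real (card (edges H)) \<le> real k - 1 + real k / ln (real k))"
    using assms(1) unfolding S_class_def mem_Collect_eq by (rule conjunct2)
  then show ?thesis using assms(2-4) by blast
qed

lemma S_sub: assumes "G \<in> S_class d" "subgraph H G" shows "H \<in> S_class d"
proof -
  have wf: "wf_graph H" using assms(2) by (simp add: subgraph_def)
  have fG: "finite (verts G)" using assms(1) by (simp add: S_class_def wf_graph_def)
  have cc: "card (verts H) \<le> card (verts G)" using assms(2) fG by (simp add: subgraph_def card_mono)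
  show ?thesis unfolding S_class_def
  proof (intro CollectI conjI wf allI impI)
    fix k :: nat and H'
    assume k: "1000 ^ (10 * (d + 1)) \<le> k \<and> k \<le> card (verts H)" and H': "subgraph H' H \<and> card (verts H') = k"
    have "subgraph H' G" using subgraph_trans assms(2) H' by blast
    then show "real (card (edges H')) \<le> real k - 1 + real k / ln (real k)"
      using S_boundD[OF assms(1), of H'] k H' cc by auto
  qed
qed

lemma T_bounds: "(a, b) \<in> set (T w) \<Longrightarrow> a < b \<and> b < N w"
proof -
  assume ab: "(a, b) \<in> set (T w)"
  have "b \<in> set (map snd (T w))" using ab by force
  then have "b \<in> set [1..<N w]" using T_N[of w] by metis
  then have "b < N w" by simp
  moreover have "a < b" using ab T_N[of w] by blast
  ultimately show ?thesis by simp
qed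

lemma card_T: "card (set (T w)) = N w - 1"
proof -
  have "distinct (map snd (T w))" using T_N[of w] by simp
  then have "distinct (T w)" using distinct_map by blast
  then have "card (set (T w)) = length (T w)" by (simp add: distinct_card)
  also have "\<dots> = length (map snd (T w))" by simp
  also have "\<dots> = N w - 1" using T_N[of w] by simp
  finally show ?thesis .
qed

lemma wf_edges_sub: "wf_graph G \<Longrightarrow> e \<in> edges G \<Longrightarrow> e \<subseteq> verts G"
proof -
  assume "wf_graph G" "e \<in> edges G"
  then obtain u v where "e = {u, v}" "u \<in> verts G" "v \<in> verts G" unfolding wf_graph_def by meson
  then show ?thesis by simp
qed

lemma comp_code:
  assumes G: "G \<in> S_class d" and r: "r \<in> verts G"
  shows "\<exists>w A \<phi>. (w,A) \<in> Code d (card (comp (edges G) r)) \<and> bij_betw \<phi> {0..<card (comp (edges G) r)} (comp (edges G) r) \<and>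
     (\<lambda>e. \<phi> ` e) ` cedges w A = {e \<in> edges G. e \<subseteq> comp (edges G) r} \<and>
     (\<forall>e\<in>cedges w A. e \<subseteq> {0..<card (comp (edges G) r)})"
proof -
  define E where "E = edges G"
  define V where "V = verts G"
  define C where "C = comp E r"
  define s where "s = card C"
  have wf: "wf_graph G" using G by (simp add: S_class_def)
  have fV: "finite V" using wf by (simp add: wf_graph_def V_def)
  have EV: "\<forall>e\<in>E. e \<subseteq> V" using wf_edges_sub[OF wf] by (simp add: E_def V_def)
  have CV: "C \<subseteq> V" using comp_sub[OF EV] r by (simp add: C_def V_def)
  have fC: "finite C" using CV fV finite_subset by blast
  obtain w \<phi> where lw: "length w \<le> 2 * s" and Nw: "N w = s" and bij: "bij_betw \<phi> {0..<s} C"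
    and ted: "\<forall>(a,b)\<in>set (T w). {\<phi> a, \<phi> b} \<in> E"
    using grown_code[OF grown_comp[OF fC[unfolded C_def]]] unfolding s_def C_def by blast
  define A where "A = {(a,b). a < b \<and> b < s \<and> {\<phi> a, \<phi> b} \<in> E \<and> (a,b) \<notin> set (T w)}"
  have Tb: "(a,b) \<in> set (T w) \<Longrightarrow> a < b \<and> b < s" for a b using T_bounds Nw by metis
  have As: "A \<subseteq> {0..<s} \<times> {0..<s}" unfolding A_def by auto
  define h where "h = (\<lambda>(a::nat,b::nat). {\<phi> a, \<phi> b})"
  have inj\<phi>: "inj_on \<phi> {0..<s}" using bij by (simp add: bij_betw_def)
  have img\<phi>: "\<phi> ` {0..<s} = C" using bij by (simp add: bij_betw_def)
  have hcomp: "(\<lambda>e. \<phi> ` e) ` cedges w A = h ` (set (T w) \<union> A)"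
    unfolding cedges_def h_def by (auto simp: image_image split: prod.splits)
  have P_ok: "\<forall>(a,b)\<in>set (T w) \<union> A. a < b \<and> b < s \<and> {\<phi> a, \<phi> b} \<in> E"
    using Tb ted unfolding A_def by auto
  have ce_sub: "\<forall>e\<in>cedges w A. e \<subseteq> {0..<s}"
  proof
    fix e assume "e \<in> cedges w A"
    then obtain a b where ab: "(a,b) \<in> set (T w) \<union> A" "e = {a, b}" unfolding cedges_def by auto
    from ab(1) P_ok have "a < b \<and> b < s" by blast
    then show "e \<subseteq> {0..<s}" using ab(2) by auto
  qed
  have "h ` (set (T w) \<union> A) = {e \<in> E. e \<subseteq> C}"
  proof
    show "h ` (set (T w) \<union> A) \<subseteq> {e \<in> E. e \<subseteq> C}"
    proof
      fix e assume "e \<in> h ` (set (T w) \<union> A)"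
      then obtain a b where ab: "(a,b) \<in> set (T w) \<union> A" "e = {\<phi> a, \<phi> b}" unfolding h_def by auto
      from ab(1) P_ok have "a < b \<and> b < s \<and> {\<phi> a, \<phi> b} \<in> E" by blast
      then have "a < s" "b < s" "e \<in> E" using ab(2) by auto
      then show "e \<in> {e \<in> E. e \<subseteq> C}" using ab img\<phi> by auto
    qed
  next
    show "{e \<in> E. e \<subseteq> C} \<subseteq> h ` (set (T w) \<union> A)"
    proof
      fix e assume e: "e \<in> {e \<in> E. e \<subseteq> C}"
      then obtain u v where uv: "e = {u, v}" "u \<noteq> v" using wf unfolding wf_graph_def E_def by blast
      have "u \<in> C" "v \<in> C" using e uv by auto
      then obtain a b where "a < s" "b < s" "\<phi> a = u" "\<phi> b = v" using img\<phi> by (metis atLeastLessThan_iff imageE)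
      then have ab: "a \<noteq> b" using uv by auto
      define a' where "a' = min a b"
      define b' where "b' = max a b"
      have e': "e = {\<phi> a', \<phi> b'}" using uv \<open>\<phi> a = u\<close> \<open>\<phi> b = v\<close> unfolding a'_def b'_def
        by (cases "a \<le> b") (auto simp: min_def max_def insert_commute)
      have "a' < b'" "b' < s" using ab \<open>a < s\<close> \<open>b < s\<close> unfolding a'_def b'_def by auto
      then have "(a', b') \<in> set (T w) \<union> A" using e e' unfolding A_def by auto
      then show "e \<in> h ` (set (T w) \<union> A)" using e' unfolding h_def by force
    qed
  qed
  then have himg: "(\<lambda>e. \<phi> ` e) ` cedges w A = {e \<in> E. e \<subseteq> C}" using hcomp by simp
  have hinj: "inj_on h (set (T w) \<union> A)"
  proof (rule inj_onI)
    fix p q assume p: "p \<in> set (T w) \<union> A" and q: "q \<in> set (T w) \<union> A" and hq: "h p = h q"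
    obtain a b where pab: "p = (a,b)" by (cases p)
    obtain c e where qce: "q = (c,e)" by (cases q)
    from p P_ok pab have o1: "a < b \<and> b < s" by blast
    from q P_ok qce have o2: "c < e \<and> e < s" by blast
    have o: "a < b" "b < s" "c < e" "e < s" using o1 o2 by auto
    have "{\<phi> a, \<phi> b} = {\<phi> c, \<phi> e}" using hq pab qce h_def by simp
    then have "\<phi> ` {a,b} = \<phi> ` {c,e}" by simp
    then have "{a,b} = {c,e}" using inj\<phi> o by (intro inj_on_image_eq_iff[THEN iffD1, OF inj\<phi>]) auto
    then have "a = c \<and> b = e" using o by (auto simp: doubleton_eq_iff)
    then show "p = q" using pab qce by simp
  qed
  have cardA: "card A \<le> gb d s"
  proof (cases "s < KK d")
    case True
    have "card A \<le> card ({0..<s} \<times> {0..<s})" using As by (intro card_mono) auto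
    then show ?thesis using True by (simp add: gb_def)
  next
    case False
    have fA: "finite A" using As finite_subset by blast
    have dis: "set (T w) \<inter> A = {}" unfolding A_def by auto
    have "card (h ` (set (T w) \<union> A)) = card (set (T w)) + card A"
      using card_image[OF hinj] fA dis by (simp add: card_Un_disjoint)
    then have cE: "card {e \<in> E. e \<subseteq> C} = (s - 1) + card A"
      using \<open>h ` (set (T w) \<union> A) = {e \<in> E. e \<subseteq> C}\<close> card_T Nw by simp
    have "\<forall>e\<in>{e \<in> E. e \<subseteq> C}. \<exists>u v. e = {u, v} \<and> u \<noteq> v \<and> u \<in> C \<and> v \<in> C"
    proof
      fix e assume e: "e \<in> {e \<in> E. e \<subseteq> C}"
      then obtain u v where uv: "e = {u, v}" "u \<noteq> v" using wf unfolding wf_graph_def E_def by blast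
      then show "\<exists>u v. e = {u, v} \<and> u \<noteq> v \<and> u \<in> C \<and> v \<in> C" using e by auto
    qed
    then have sub: "subgraph (C, {e \<in> E. e \<subseteq> C}) G"
      unfolding subgraph_def wf_graph_def verts_def edges_def
      using fC CV unfolding E_def V_def verts_def edges_def by auto
    have "(1::nat) \<le> 1000 ^ (10 * (d + 1))" by (rule one_le_power) simp
    then have s1: "s \<ge> 1" using False unfolding KK_def by linarith
    have cC: "card C \<le> card V" using CV fV card_mono by blast
    have "real (card {e \<in> E. e \<subseteq> C}) \<le> real s - 1 + real s / ln (real s)"
      using S_boundD[OF G, of "(C, {e \<in> E. e \<subseteq> C})"] False sub cC unfolding KK_def s_def V_def
      by (simp add: verts_def edges_def)
    then have "real (card A) \<le> real s / ln (real s)" using cE s1 by simp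
    then show ?thesis using False by (simp add: gb_def le_nat_floor)
  qed
  have "(w, A) \<in> Code d s" unfolding Code_def using lw As cardA by simp
  then show ?thesis using bij himg ce_sub unfolding s_def C_def E_def
    by (intro exI[of _ w] exI[of _ A] exI[of _ \<phi>] conjI) auto
qed

lemma wf_edge: "wf_graph G \<Longrightarrow> e \<in> edges G \<Longrightarrow> \<exists>u v. e = {u, v} \<and> u \<noteq> v \<and> u \<in> verts G \<and> v \<in> verts G"
  unfolding wf_graph_def by meson

lemma r_in_comp: "r \<in> comp E r" by (simp add: comp_def)

lemma comp_closed: "u \<in> comp E r \<Longrightarrow> {u, v} \<in> E \<Longrightarrow> v \<in> comp E r"
proof -
  assume u: "u \<in> comp E r" and e: "{u, v} \<in> E"
  have "(u, v) \<in> adj E" using e by (simp add: adj_def)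
  then show ?thesis using u unfolding comp_def by (simp add: rtrancl.rtrancl_into_rtrancl)
qed

lemma main_code:
  "\<forall>G::'a graph. G \<in> S_class d \<longrightarrow> card (verts G) = n \<longrightarrow> (\<exists>cl \<in> CLs d n. iso2 G (decL cl))"
proof (induction n rule: less_induct)
  case (less n)
  show ?case
  proof (intro allI impI)
    fix G :: "'a graph" assume G: "G \<in> S_class d" and cn: "card (verts G) = n"
    define V where "V = verts G"
    define E where "E = edges G"
    have wf: "wf_graph G" using G by (simp add: S_class_def)
    have fV: "finite V" using wf by (simp add: wf_graph_def V_def)
    have EV: "\<forall>e\<in>E. e \<subseteq> V" using wf_edges_sub[OF wf] by (simp add: E_def V_def)
    show "\<exists>cl \<in> CLs d n. iso2 G (decL cl)"
    proof (cases "V = {}")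
      case True
      have "E = {}"
      proof (rule ccontr)
        assume "E \<noteq> {}"
        then obtain e where "e \<in> E" by blast
        then obtain u v where "u \<in> V" using wf_edge[OF wf] unfolding E_def V_def by blast
        then show False using True by simp
      qed
      moreover have "n = 0" using cn True V_def by simp
      moreover have "[] \<in> CLs d 0" by (simp add: CLs_def valid_def)
      ultimately show ?thesis using True unfolding iso2_def V_def E_def
        by (intro bexI[of _ "[]"]) (auto simp: verts_def edges_def bij_betw_def)
    next
      case False
      then obtain r where r: "r \<in> V" by blast
      define C where "C = comp E r"
      define s where "s = card C"
      obtain w A \<phi> where code: "(w,A) \<in> Code d s" and bij: "bij_betw \<phi> {0..<s} C"
        and ce: "(\<lambda>e. \<phi> ` e) ` cedges w A = {e \<in> E. e \<subseteq> C}"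
        and ces: "\<forall>e\<in>cedges w A. e \<subseteq> {0..<s}"
        using comp_code[OF G r[unfolded V_def], folded E_def, folded C_def, folded s_def] by (elim exE conjE)
      have CV: "C \<subseteq> V" using comp_sub[OF EV r] by (simp add: C_def)
      have fC: "finite C" using CV fV finite_subset by blast
      have rC: "r \<in> C" by (simp add: C_def r_in_comp)
      have s1: "1 \<le> s" using fC rC unfolding s_def by (metis One_nat_def Suc_leI card_gt_0_iff empty_iff)
      define G' where "G' = (V - C, {e \<in> E. e \<subseteq> V - C})"
      have wf': "wf_graph G'"
      proof -
        have "\<forall>e\<in>{e \<in> E. e \<subseteq> V - C}. \<exists>u v. e = {u, v} \<and> u \<noteq> v \<and> u \<in> V - C \<and> v \<in> V - C"
        proof
          fix e assume e: "e \<in> {e \<in> E. e \<subseteq> V - C}"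
          then obtain u v where uv: "e = {u, v}" "u \<noteq> v" using wf_edge[OF wf] unfolding E_def by blast
          then show "\<exists>u v. e = {u, v} \<and> u \<noteq> v \<and> u \<in> V - C \<and> v \<in> V - C" using e by auto
        qed
        then show ?thesis unfolding wf_graph_def G'_def verts_def edges_def using fV by auto
      qed
      have vG': "verts G' = V - C" "edges G' = {e \<in> E. e \<subseteq> V - C}" by (simp_all add: G'_def verts_def edges_def)
      have sub': "subgraph G' G" unfolding subgraph_def using wf' vG' by (auto simp: V_def E_def)
      have G'S: "G' \<in> S_class d" using S_sub[OF G sub'] .
      have cV: "card V = s + card (V - C)"
      proof -
        have "card (V - C) = card V - card C" using card_Diff_subset[OF fC CV] .
        moreover have "card C \<le> card V" using card_mono[OF fV CV] .
        ultimately show ?thesis unfolding s_def by linarith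
      qed
      have lt: "card (V - C) < n" using cV cn s1 V_def by simp
      have "\<exists>cl\<in>CLs d (card (V - C)). iso2 G' (decL cl)"
        using less.IH[OF lt, THEN spec, of G'] G'S vG'(1) by simp
      then obtain cl' where cl': "cl' \<in> CLs d (card (V - C))" and iso': "iso2 G' (decL cl')" by blast
      have "(\<exists>f. bij_betw f (verts (decL cl')) (verts G') \<and> edges G' = (\<lambda>e. f ` e) ` edges (decL cl')) \<and> (\<forall>e\<in>edges (decL cl'). e \<subseteq> verts (decL cl'))"
        using iso' unfolding iso2_def .
      then obtain f' where bij'0: "bij_betw f' (verts (decL cl')) (verts G')"
        and ed'0: "edges G' = (\<lambda>e. f' ` e) ` edges (decL cl')"
        and es'0: "\<forall>e\<in>edges (decL cl'). e \<subseteq> verts (decL cl')" by blast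
      have bij': "bij_betw f' (fst (decL cl')) (V - C)" using bij'0 vG'(1) by (simp add: verts_def)
      have ed': "{e \<in> E. e \<subseteq> V - C} = (\<lambda>e. f' ` e) ` snd (decL cl')" using ed'0 vG'(2) by (simp add: edges_def)
      have es': "\<forall>e\<in>snd (decL cl'). e \<subseteq> fst (decL cl')" using es'0 by (simp add: verts_def edges_def)
      define cl where "cl = (s, w, A) # cl'"
      have v': "valid d cl'" "sum_list (map fst cl') = card (V - C)" using cl' by (simp_all add: CLs_def)
      have "valid d cl" using v'(1) code s1 unfolding cl_def valid_def by simp
      moreover have "sum_list (map fst cl) = n" unfolding cl_def using v'(2) cV cn V_def by simp
      ultimately have clC: "cl \<in> CLs d n" by (simp add: CLs_def)
      define f where "f i = (if i < s then \<phi> i else f' (i - s))" for i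
      have dv: "fst (decL cl) = {0..<s} \<union> (+) s ` fst (decL cl')" unfolding cl_def by (simp split: prod.splits)
      have de: "snd (decL cl) = cedges w A \<union> (\<lambda>e. (+) s ` e) ` snd (decL cl')" unfolding cl_def by (simp split: prod.splits)
      have b1: "bij_betw f {0..<s} C" using bij by (rule bij_betw_cong[THEN iffD1, rotated]) (simp add: f_def)
      have b2: "bij_betw f ((+) s ` fst (decL cl')) (V - C)"
      proof -
        have inj: "inj_on (\<lambda>i. i - s) ((+) s ` fst (decL cl'))" by (auto simp: inj_on_def)
        have im: "(\<lambda>i. i - s) ` ((+) s ` fst (decL cl')) = fst (decL cl')" by (simp add: image_image)
        have "bij_betw (\<lambda>i. i - s) ((+) s ` fst (decL cl')) (fst (decL cl'))"
          using inj im by (simp add: bij_betw_def)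
        then have "bij_betw (f' \<circ> (\<lambda>i. i - s)) ((+) s ` fst (decL cl')) (V - C)"
          using bij' by (rule bij_betw_trans)
        moreover have "\<forall>i\<in>(+) s ` fst (decL cl'). (f' \<circ> (\<lambda>i. i - s)) i = f i" by (auto simp: f_def)
        ultimately show ?thesis using bij_betw_cong[of "(+) s ` fst (decL cl')" "f' \<circ> (\<lambda>i. i - s)" f "V - C"] by blast
      qed
      have bij_f: "bij_betw f (fst (decL cl)) V"
      proof -
        have "bij_betw f ({0..<s} \<union> (+) s ` fst (decL cl')) (C \<union> (V - C))"
          using b1 b2 by (intro bij_betw_combine) auto
        then show ?thesis using dv CV by (simp add: Un_absorb1 Un_Diff_cancel)
      qed
      have i1: "(\<lambda>e. f ` e) ` cedges w A = {e \<in> E. e \<subseteq> C}"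
      proof -
        have fe: "f ` e = \<phi> ` e" if "e \<in> cedges w A" for e
        proof -
          have "e \<subseteq> {0..<s}" using ces that by blast
          then show ?thesis by (intro image_cong refl) (auto simp: f_def)
        qed
        have "(\<lambda>e. f ` e) ` cedges w A = (\<lambda>e. \<phi> ` e) ` cedges w A"
          using fe by (rule image_cong[OF refl])
        then show ?thesis using ce by simp
      qed
      have i2: "(\<lambda>e. f ` e) ` (\<lambda>e. (+) s ` e) ` snd (decL cl') = {e \<in> E. e \<subseteq> V - C}"
      proof -
        have fx: "f (s + x) = f' x" for x by (simp add: f_def)
        have "f ` ((+) s ` e) = f' ` e" for e by (simp add: image_image fx)
        then have "(\<lambda>e. f ` e) ` (\<lambda>e. (+) s ` e) ` snd (decL cl') = (\<lambda>e. f' ` e) ` snd (decL cl')"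
          by (simp add: image_image)
        then show ?thesis using ed' by simp
      qed
      have Esplit: "E = {e \<in> E. e \<subseteq> C} \<union> {e \<in> E. e \<subseteq> V - C}"
      proof
        show "E \<subseteq> {e \<in> E. e \<subseteq> C} \<union> {e \<in> E. e \<subseteq> V - C}"
        proof
          fix e assume e: "e \<in> E"
          then obtain u v where uv: "e = {u, v}" using wf_edge[OF wf] unfolding E_def by blast
          have ev: "e \<subseteq> V" using EV e by blast
          have "u \<in> C \<longleftrightarrow> v \<in> C"
            using comp_closed[of u E r v] comp_closed[of v E r u] e uv unfolding C_def by (auto simp: insert_commute)
          then show "e \<in> {e \<in> E. e \<subseteq> C} \<union> {e \<in> E. e \<subseteq> V - C}" using e ev uv by auto
        qed
      qed auto
      have edges_eq: "edges G = (\<lambda>e. f ` e) ` snd (decL cl)"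
        unfolding de image_Un i1 i2 using Esplit E_def by simp
      have within: "\<forall>e\<in>snd (decL cl). e \<subseteq> fst (decL cl)"
        unfolding de dv using ces es' by blast
      have "iso2 G (decL cl)" unfolding iso2_def verts_def[symmetric] edges_def[symmetric]
        using bij_f edges_eq within V_def by (auto simp: verts_def edges_def)
      then show ?thesis using clC by blast
    qed
  qed
qed

lemma sum_pow2_le: "(\<Sum>i\<le>n. (2::nat) ^ i) < 2 ^ Suc n"
  by (induct n) auto

lemma card_words: "card {w :: bool list. length w \<le> n} \<le> 2 ^ Suc n"
proof -
  have "card {w :: bool list. set w \<subseteq> UNIV \<and> length w \<le> n} = (\<Sum>i\<le>n. card (UNIV :: bool set) ^ i)"
    by (rule card_lists_length_le) simp
  then have "card {w :: bool list. length w \<le> n} = (\<Sum>i\<le>n. 2 ^ i)" by simp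
  then show ?thesis using sum_pow2_le[of n] by simp
qed

lemma finite_words: "finite {w :: bool list. length w \<le> n}"
  using finite_lists_length_le[of "UNIV :: bool set" n] by simp

lemma card_small_subsets:
  assumes "finite X"
  shows "card {A. A \<subseteq> X \<and> card A \<le> a} \<le> (card X + 1) ^ a"
proof (induction a)
  case 0
  have "{A. A \<subseteq> X \<and> card A \<le> 0} \<subseteq> {{}}" using assms by (auto dest: finite_subset)
  from card_mono[OF _ this] have "card {A. A \<subseteq> X \<and> card A \<le> 0} \<le> card {{}}" by simp
  then show ?case by simp
next
  case (Suc a)
  let ?S = "{A. A \<subseteq> X \<and> card A \<le> a}"
  have "?S \<subseteq> Pow X" by blast
  then have fS: "finite ?S" using assms finite_subset by blast
  have sub: "{A. A \<subseteq> X \<and> card A \<le> Suc a} \<subseteq> insert {} ((\<lambda>(x, B). insert x B) ` (X \<times> ?S))"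
  proof
    fix A assume A: "A \<in> {A. A \<subseteq> X \<and> card A \<le> Suc a}"
    show "A \<in> insert {} ((\<lambda>(x, B). insert x B) ` (X \<times> ?S))"
    proof (cases "A = {}")
      case True then show ?thesis by simp
    next
      case False
      then obtain x where x: "x \<in> A" by blast
      have AX: "A \<subseteq> X" "card A \<le> Suc a" using A by simp_all
      have fA: "finite A" using AX(1) assms by (rule finite_subset)
      have "card (A - {x}) \<le> a" using AX(2) x fA by (simp add: card_Diff_singleton)
      moreover have "x \<in> X" "A - {x} \<subseteq> X" using AX(1) x by blast+
      ultimately have "(x, A - {x}) \<in> X \<times> ?S" by simp
      moreover have "A = (\<lambda>(x, B). insert x B) (x, A - {x})" using x by (simp add: insert_absorb)
      ultimately have "A \<in> (\<lambda>(x, B). insert x B) ` (X \<times> ?S)" by (rule rev_image_eqI)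
      then show ?thesis by (rule insertI2)
    qed
  qed
  have "card {A. A \<subseteq> X \<and> card A \<le> Suc a} \<le> card (insert {} ((\<lambda>(x, B). insert x B) ` (X \<times> ?S)))"
    using sub fS assms by (intro card_mono) auto
  also have "\<dots> \<le> Suc (card ((\<lambda>(x, B). insert x B) ` (X \<times> ?S)))" using fS assms by (simp add: card_insert_if)
  also have "\<dots> \<le> Suc (card (X \<times> ?S))"
    using card_image_le[OF finite_cartesian_product[OF assms fS], of "\<lambda>(x, B). insert x B"] by simp
  also have "\<dots> = Suc (card X * card ?S)" by (simp add: card_cartesian_product)
  also have "\<dots> \<le> Suc (card X * (card X + 1) ^ a)" using Suc.IH by simp
  also have "\<dots> \<le> (card X + 1) ^ Suc a"
  proof -
    have "1 \<le> (card X + 1) ^ a" by simp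
    then show ?thesis by simp
  qed
  finally show ?case .
qed

definition MM :: "nat \<Rightarrow> nat" where "MM d = (KK d * KK d + 1) ^ KK d * 27"
definition BB :: "nat \<Rightarrow> nat" where "BB d = 8 * MM d"

lemma KK_ge: "1000 \<le> KK d"
proof -
  have "(1000::nat) ^ 1 \<le> 1000 ^ (10 * (d + 1))" by (rule power_increasing) auto
  then show ?thesis by (simp add: KK_def)
qed

lemma pow_small:
  assumes "1 \<le> s" "s < KK d"
  shows "(s * s + 1) ^ (s * s) \<le> MM d ^ s"
proof -
  let ?K = "KK d"
  have "(s * s + 1) ^ (s * s) \<le> (?K * ?K + 1) ^ (s * s)"
    using assms by (intro power_mono) (auto intro: mult_mono)
  also have "\<dots> \<le> (?K * ?K + 1) ^ (?K * s)"
    using assms by (intro power_increasing) auto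
  also have "\<dots> = ((?K * ?K + 1) ^ ?K) ^ s" by (simp add: power_mult)
  also have "\<dots> \<le> MM d ^ s" unfolding MM_def by (intro power_mono) auto
  finally show ?thesis .
qed

lemma pow_large:
  assumes "KK d \<le> s"
  shows "(s * s + 1) ^ (nat \<lfloor>real s / ln (real s)\<rfloor>) \<le> MM d ^ s"
proof -
  define g where "g = nat \<lfloor>real s / ln (real s)\<rfloor>"
  have s3: "3 \<le> s" using assms KK_ge[of d] by linarith
  have sp: "0 < real s" using s3 by simp
  have lnp: "0 < ln (real s)" using s3 by simp
  have gle: "real g \<le> real s / ln (real s)" unfolding g_def
    by (rule of_nat_floor) (use sp lnp in simp)
  have gln: "real g * ln (real s) \<le> real s" using gle lnp by (simp add: field_simps)
  have b1: "s * s + 1 \<le> s ^ 3"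
  proof -
    have "s * s * 1 + 1 \<le> s * s * 2" using s3 by simp
    also have "\<dots> \<le> s * s * s" using s3 by (intro mult_left_mono) auto
    finally show ?thesis by (simp add: power3_eq_cube)
  qed
  have "(s * s + 1) ^ g \<le> (s ^ 3) ^ g" using b1 by (rule power_mono) simp
  also have "\<dots> = s ^ (3 * g)" by (simp add: power_mult)
  finally have c1: "real ((s * s + 1) ^ g) \<le> real s ^ (3 * g)" by (metis of_nat_le_iff of_nat_power)
  have "real s ^ (3 * g) = exp (ln (real s)) ^ (3 * g)" using sp by simp
  also have "\<dots> = exp (real (3 * g) * ln (real s))" by (rule exp_of_nat_mult[symmetric])
  also have "\<dots> \<le> exp (real (3 * s) * 1)" using gln by simp
  also have "\<dots> = exp 1 ^ (3 * s)" by (rule exp_of_nat_mult)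
  also have "\<dots> \<le> 3 ^ (3 * s)" using exp_le by (intro power_mono) auto
  also have "\<dots> = real (27 ^ s)" by (simp add: power_mult)
  finally have "real ((s * s + 1) ^ g) \<le> real (27 ^ s)" using c1 by linarith
  then have "(s * s + 1) ^ g \<le> 27 ^ s" by (simp only: of_nat_le_iff)
  also have "\<dots> \<le> MM d ^ s" unfolding MM_def by (intro power_mono) auto
  finally show ?thesis unfolding g_def .
qed

lemma Code_finite: "finite (Code d s)"
proof -
  have "Code d s \<subseteq> {w :: bool list. length w \<le> 2 * s} \<times> Pow ({0..<s} \<times> {0..<s})"
    unfolding Code_def by auto
  then show ?thesis by (rule finite_subset) (simp add: finite_words)
qed

lemma Code_card:
  assumes "1 \<le> s"
  shows "card (Code d s) \<le> BB d ^ s"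
proof -
  let ?W = "{w :: bool list. length w \<le> 2 * s}"
  let ?X = "{0..<s} \<times> {0..<s}"
  let ?S = "{A. A \<subseteq> ?X \<and> card A \<le> gb d s}"
  have fX: "finite ?X" by simp
  have "?S \<subseteq> Pow ?X" by blast
  then have fS: "finite ?S" using fX finite_subset by blast
  have "Code d s \<subseteq> ?W \<times> ?S" unfolding Code_def by auto
  then have "card (Code d s) \<le> card (?W \<times> ?S)"
    by (rule card_mono[OF finite_cartesian_product[OF finite_words fS]])
  also have "\<dots> = card ?W * card ?S" by (simp add: card_cartesian_product)
  also have "\<dots> \<le> 2 ^ Suc (2 * s) * (s * s + 1) ^ gb d s"
  proof (rule mult_mono)
    show "card ?W \<le> 2 ^ Suc (2 * s)" by (rule card_words)
    show "card ?S \<le> (s * s + 1) ^ gb d s" using card_small_subsets[OF fX, of "gb d s"] by simp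
  qed auto
  also have "\<dots> \<le> 8 ^ s * MM d ^ s"
  proof (rule mult_mono)
    have "(2::nat) ^ Suc (2 * s) = 2 * 4 ^ s" by (simp add: power_mult)
    also have "\<dots> \<le> 2 ^ s * 4 ^ s" using assms by (intro mult_right_mono) (auto simp: self_le_power)
    also have "\<dots> = 8 ^ s" by (simp add: power_mult_distrib[symmetric])
    finally show "(2::nat) ^ Suc (2 * s) \<le> 8 ^ s" .
    show "(s * s + 1) ^ gb d s \<le> MM d ^ s"
      using pow_small[OF assms] pow_large[of d s] by (cases "s < KK d") (auto simp: gb_def)
  qed auto
  also have "\<dots> = BB d ^ s" by (simp add: BB_def power_mult_distrib)
  finally show ?thesis .
qed

lemma sum_pow2_rev: "(\<Sum>s\<in>{1..n}. (2::nat) ^ (n - s)) < 2 ^ n"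
proof (induction n)
  case 0 then show ?case by simp
next
  case (Suc n)
  have "(\<Sum>s\<in>{1..Suc n}. (2::nat) ^ (Suc n - s)) = (\<Sum>s\<in>{1..n}. 2 ^ (Suc n - s)) + 1" by simp
  also have "(\<Sum>s\<in>{1..n}. (2::nat) ^ (Suc n - s)) = (\<Sum>s\<in>{1..n}. 2 * 2 ^ (n - s))"
    by (intro sum.cong refl) (simp add: Suc_diff_le)
  also have "\<dots> = 2 * (\<Sum>s\<in>{1..n}. 2 ^ (n - s))" by (simp add: sum_distrib_left)
  finally show ?case using Suc.IH by simp
qed

lemma CLs_zero: "CLs d 0 = {[]}"
proof -
  have "cl \<in> CLs d 0 \<Longrightarrow> cl = []" for cl
  proof -
    assume "cl \<in> CLs d 0"
    then have v: "valid d cl" "sum_list (map fst cl) = 0" by (simp_all add: CLs_def)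
    show "cl = []"
    proof (cases cl)
      case Nil then show ?thesis .
    next
      case (Cons p cl')
      obtain s w A where p: "p = (s, w, A)" by (cases p) auto
      have "1 \<le> s" using v(1) Cons p by (simp add: valid_def)
      then show ?thesis using v(2) Cons p by simp
    qed
  qed
  moreover have "[] \<in> CLs d 0" by (simp add: CLs_def valid_def)
  ultimately show ?thesis by blast
qed

lemma CLs_step:
  assumes "0 < n"
  shows "CLs d n \<subseteq> (\<Union>s\<in>{1..n}. (\<lambda>(c, cl). (s, fst c, snd c) # cl) ` (Code d s \<times> CLs d (n - s)))"
proof
  fix cl assume cl: "cl \<in> CLs d n"
  then have v: "valid d cl" "sum_list (map fst cl) = n" by (simp_all add: CLs_def)
  show "cl \<in> (\<Union>s\<in>{1..n}. (\<lambda>(c, cl). (s, fst c, snd c) # cl) ` (Code d s \<times> CLs d (n - s)))"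
  proof (cases cl)
    case Nil then show ?thesis using v assms by simp
  next
    case (Cons p cl')
    obtain s w A where p: "p = (s, w, A)" by (cases p) auto
    have s1: "1 \<le> s" and code: "(w, A) \<in> Code d s" and v': "valid d cl'"
      using v(1) Cons p by (simp_all add: valid_def)
    have sum: "sum_list (map fst cl') = n - s" "s \<le> n" using v(2) Cons p by simp_all
    have "cl' \<in> CLs d (n - s)" using v' sum by (simp add: CLs_def)
    then have "((w, A), cl') \<in> Code d s \<times> CLs d (n - s)" using code by simp
    then have "cl \<in> (\<lambda>(c, cl). (s, fst c, snd c) # cl) ` (Code d s \<times> CLs d (n - s))"
      using Cons p by (auto intro: rev_image_eqI)
    then show ?thesis using s1 sum(2) by auto
  qed
qed

lemma CLs_bound: "finite (CLs d n) \<and> card (CLs d n) \<le> (2 * BB d) ^ n"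
proof (induction n rule: less_induct)
  case (less n)
  show ?case
  proof (cases "n = 0")
    case True then show ?thesis by (simp add: CLs_zero)
  next
    case False
    let ?F = "\<lambda>s. (\<lambda>(c, cl). (s, fst c, snd c) # cl) ` (Code d s \<times> CLs d (n - s))"
    have fin: "finite (?F s)" if "s \<in> {1..n}" for s
      using less.IH[of "n - s"] that Code_finite[of d s] by auto
    have cF: "card (?F s) \<le> BB d ^ n * 2 ^ (n - s)" if "s \<in> {1..n}" for s
    proof -
      have s: "1 \<le> s" "s \<le> n" using that by auto
      have "card (?F s) \<le> card (Code d s \<times> CLs d (n - s))"
        using less.IH[of "n - s"] s Code_finite[of d s] by (intro card_image_le) auto
      also have "\<dots> = card (Code d s) * card (CLs d (n - s))" by (simp add: card_cartesian_product)
      also have "\<dots> \<le> BB d ^ s * (2 * BB d) ^ (n - s)"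
        using Code_card[OF s(1), of d] less.IH[of "n - s"] s by (intro mult_mono) auto
      also have "\<dots> = BB d ^ n * 2 ^ (n - s)"
      proof -
        have "BB d ^ s * (2 * BB d) ^ (n - s) = 2 ^ (n - s) * (BB d ^ s * BB d ^ (n - s))"
          by (simp add: power_mult_distrib)
        also have "BB d ^ s * BB d ^ (n - s) = BB d ^ n" using s by (simp add: power_add[symmetric])
        finally show ?thesis by simp
      qed
      finally show ?thesis .
    qed
    have sub: "CLs d n \<subseteq> (\<Union>s\<in>{1..n}. ?F s)" using CLs_step[of n d] False by simp
    have finU: "finite (\<Union>s\<in>{1..n}. ?F s)" using fin by blast
    have "card (CLs d n) \<le> card (\<Union>s\<in>{1..n}. ?F s)" using sub finU by (rule card_mono[rotated])
    also have "\<dots> \<le> (\<Sum>s\<in>{1..n}. card (?F s))" by (rule card_UN_le) simp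
    also have "\<dots> \<le> (\<Sum>s\<in>{1..n}. BB d ^ n * 2 ^ (n - s))" using cF by (rule sum_mono)
    also have "\<dots> = BB d ^ n * (\<Sum>s\<in>{1..n}. 2 ^ (n - s))" by (simp add: sum_distrib_left)
    also have "\<dots> \<le> BB d ^ n * 2 ^ n" using sum_pow2_rev[of n] by (intro mult_left_mono) auto
    also have "\<dots> = (2 * BB d) ^ n" by (simp add: power_mult_distrib)
    finally show ?thesis using sub finU finite_subset by blast
  qed
qed

definition giso :: "'a graph \<Rightarrow> 'b graph \<Rightarrow> bool" where
  "giso G H \<longleftrightarrow> (\<exists>f. bij_betw f (verts G) (verts H) \<and> edges H = (\<lambda>e. f ` e) ` edges G)"

lemma graph_iso_giso: "graph_iso G H = giso G H"
  by (simp add: graph_iso_def giso_def)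

lemma giso_refl: "giso G G"
  unfolding giso_def by (intro exI[of _ id]) auto

lemma giso_sym:
  assumes within: "\<forall>e\<in>edges G. e \<subseteq> verts G" and gi: "giso G H"
  shows "giso H G"
proof -
  obtain f where bij: "bij_betw f (verts G) (verts H)" and ed: "edges H = (\<lambda>e. f ` e) ` edges G"
    using gi unfolding giso_def by blast
  define g where "g = inv_into (verts G) f"
  have bg: "bij_betw g (verts H) (verts G)" unfolding g_def using bij by (rule bij_betw_inv_into)
  have inj: "inj_on f (verts G)" using bij by (simp add: bij_betw_def)
  have "(\<lambda>e. g ` e) ` edges H = (\<lambda>e. g ` f ` e) ` edges G" using ed by (simp add: image_image)
  also have "\<dots> = (\<lambda>e. e) ` edges G"
  proof (rule image_cong[OF refl])
    fix e assume "e \<in> edges G"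
    then have "e \<subseteq> verts G" using within by blast
    then show "g ` f ` e = e" unfolding g_def using inj by simp
  qed
  finally have "edges G = (\<lambda>e. g ` e) ` edges H" by simp
  then show ?thesis using bg unfolding giso_def by blast
qed

lemma giso_trans:
  assumes "giso G H" "giso H K" shows "giso G K"
proof -
  obtain f1 where b1: "bij_betw f1 (verts G) (verts H)" and e1: "edges H = (\<lambda>e. f1 ` e) ` edges G"
    using assms(1) unfolding giso_def by blast
  obtain f2 where b2: "bij_betw f2 (verts H) (verts K)" and e2: "edges K = (\<lambda>e. f2 ` e) ` edges H"
    using assms(2) unfolding giso_def by blast
  have "bij_betw (f2 \<circ> f1) (verts G) (verts K)" using b1 b2 by (rule bij_betw_trans)
  moreover have "edges K = (\<lambda>e. (f2 \<circ> f1) ` e) ` edges G" using e1 e2 by (simp add: image_image image_comp)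
  ultimately show ?thesis unfolding giso_def by blast
qed

lemma iso2_giso: "iso2 G H \<Longrightarrow> giso H G \<and> (\<forall>e\<in>edges H. e \<subseteq> verts H)"
  unfolding iso2_def giso_def by blast

lemma iso2_common: "iso2 G1 H \<Longrightarrow> iso2 G2 H \<Longrightarrow> graph_iso G1 G2"
proof -
  assume a: "iso2 G1 H" "iso2 G2 H"
  have "giso H G1" "\<forall>e\<in>edges H. e \<subseteq> verts H" "giso H G2" using iso2_giso[OF a(1)] iso2_giso[OF a(2)] by auto
  then have "giso G1 H" "giso H G2" using giso_sym by blast+
  then show ?thesis unfolding graph_iso_giso by (rule giso_trans)
qed

lemma S_iso:
  assumes G: "G \<in> S_class d" and wfH: "wf_graph H" and gi: "graph_iso G H"
  shows "H \<in> S_class d"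
proof -
  obtain f where bij: "bij_betw f (verts G) (verts H)" and ed: "edges H = (\<lambda>e. f ` e) ` edges G"
    using gi unfolding graph_iso_def by blast
  define g where "g = inv_into (verts G) f"
  have bg: "bij_betw g (verts H) (verts G)" unfolding g_def using bij by (rule bij_betw_inv_into)
  have injf: "inj_on f (verts G)" using bij by (simp add: bij_betw_def)
  have injg: "inj_on g (verts H)" using bg by (simp add: bij_betw_def)
  have imgg: "g ` verts H = verts G" using bg by (simp add: bij_betw_def)
  have wfG: "wf_graph G" using G by (simp add: S_class_def)
  have cc: "card (verts H) = card (verts G)" using bij_betw_same_card[OF bij] by simp
  show ?thesis unfolding S_class_def
  proof (intro CollectI conjI wfH allI impI)
    fix k :: nat and H'
    assume k: "1000 ^ (10 * (d + 1)) \<le> k \<and> k \<le> card (verts H)" and H': "subgraph H' H \<and> card (verts H') = k"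
    have wfH': "wf_graph H'" and vH': "verts H' \<subseteq> verts H" and eH': "edges H' \<subseteq> edges H"
      using H' by (simp_all add: subgraph_def)
    define G' where "G' = (g ` verts H', (\<lambda>e. g ` e) ` edges H')"
    have vG': "verts G' = g ` verts H'" and eG': "edges G' = (\<lambda>e. g ` e) ` edges H'"
      by (simp_all add: G'_def verts_def edges_def)
    have injg': "inj_on g (verts H')" using injg vH' inj_on_subset by blast
    have cv: "card (verts G') = k" using H' injg' vG' by (simp add: card_image)
    have eHsub: "\<forall>e\<in>edges H'. e \<subseteq> verts H'" using wf_edges_sub[OF wfH'] by blast
    have "inj_on ((`) g) (edges H')"
    proof (rule inj_on_image)
      have "\<Union>(edges H') \<subseteq> verts H'" using eHsub by blast
      then show "inj_on g (\<Union>(edges H'))" using injg' inj_on_subset by blast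
    qed
    then have ce: "card (edges G') = card (edges H')" using eG' by (simp add: card_image)
    have wfG': "wf_graph G'"
    proof -
      have "finite (verts H')" using wfH' by (simp add: wf_graph_def)
      then have "finite (verts G')" using vG' by simp
      moreover have "\<forall>e\<in>edges G'. \<exists>u v. e = {u, v} \<and> u \<noteq> v \<and> u \<in> verts G' \<and> v \<in> verts G'"
      proof
        fix e assume "e \<in> edges G'"
        then obtain e0 where e0: "e0 \<in> edges H'" "e = g ` e0" using eG' by blast
        obtain u v where uv: "e0 = {u, v}" "u \<noteq> v" "u \<in> verts H'" "v \<in> verts H'"
          using wf_edge[OF wfH' e0(1)] by blast
        have "g u \<noteq> g v" using injg' uv by (meson inj_on_contraD)
        then show "\<exists>u v. e = {u, v} \<and> u \<noteq> v \<and> u \<in> verts G' \<and> v \<in> verts G'"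
          using uv e0 vG' by auto
      qed
      ultimately show ?thesis unfolding wf_graph_def by blast
    qed
    have "edges G' \<subseteq> edges G"
    proof
      fix e assume "e \<in> edges G'"
      then obtain e0 where e0: "e0 \<in> edges H'" "e = g ` e0" using eG' by blast
      then have "e0 \<in> edges H" using eH' by blast
      then obtain e1 where e1: "e1 \<in> edges G" "e0 = f ` e1" using ed by blast
      have "e1 \<subseteq> verts G" using wf_edges_sub[OF wfG e1(1)] .
      then have "g ` f ` e1 = e1" unfolding g_def using injf by simp
      then show "e \<in> edges G" using e0 e1 by simp
    qed
    moreover have "verts G' \<subseteq> verts G" using vG' vH' imgg by blast
    ultimately have sub: "subgraph G' G" using wfG' by (simp add: subgraph_def)
    have "real (card (edges G')) \<le> real (card (verts G')) - 1 + real (card (verts G')) / ln (real (card (verts G')))"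
      using S_boundD[OF G _ _ sub] cv k cc by simp
    then show "real (card (edges H')) \<le> real k - 1 + real k / ln (real k)" using ce cv by simp
  qed
qed

lemma S_hered:
  assumes G: "G \<in> S_class d" and ind: "induced_subgraph H G"
  shows "H \<in> S_class d"
proof -
  have wfG: "wf_graph G" using G by (simp add: S_class_def)
  have vH: "verts H \<subseteq> verts G" and eH: "edges H = {e \<in> edges G. e \<subseteq> verts H}"
    using ind by (simp_all add: induced_subgraph_def)
  have "finite (verts H)" using vH wfG finite_subset by (auto simp: wf_graph_def)
  moreover have "\<forall>e\<in>edges H. \<exists>u v. e = {u, v} \<and> u \<noteq> v \<and> u \<in> verts H \<and> v \<in> verts H"
  proof
    fix e assume e: "e \<in> edges H"
    then have e2: "e \<in> edges G" "e \<subseteq> verts H" using eH by auto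
    obtain u v where "e = {u, v}" "u \<noteq> v" using wf_edge[OF wfG e2(1)] by blast
    then show "\<exists>u v. e = {u, v} \<and> u \<noteq> v \<and> u \<in> verts H \<and> v \<in> verts H" using e2 by auto
  qed
  ultimately have "wf_graph H" unfolding wf_graph_def by blast
  then have "subgraph H G" using vH eH by (auto simp: subgraph_def)
  then show ?thesis using S_sub[OF G] by blast
qed

lemma wf_within: "wf_graph G \<Longrightarrow> \<forall>e\<in>edges G. e \<subseteq> verts G"
  using wf_edges_sub by blast

lemma quot_count:
  fixes C :: "'a graph set" and B :: "(nat \<times> bool list \<times> (nat \<times> nat) set) list set"
  assumes wfC: "\<forall>G\<in>C. wf_graph G" and cov: "\<forall>G\<in>C. \<exists>cl\<in>B. iso2 G (decL cl)" and fB: "finite B"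
  defines "R \<equiv> {(G, H). G \<in> C \<and> H \<in> C \<and> graph_iso G H}"
  shows "finite (C // R) \<and> card (C // R) \<le> card B"
proof -
  have cls: "\<exists>G\<in>C. X = R `` {G}" if "X \<in> C // R" for X using that unfolding quotient_def by blast
  have eqc: "R `` {G1} = R `` {G2}" if "G1 \<in> C" "G2 \<in> C" "giso G1 G2" for G1 G2
  proof -
    have s21: "giso G2 G1" using giso_sym[OF wf_within that(3)] wfC that(1) by blast
    have "K \<in> R `` {G1} \<longleftrightarrow> K \<in> R `` {G2}" for K
    proof -
      have "giso G1 K \<longleftrightarrow> giso G2 K" using giso_trans that(3) s21 by blast
      then show ?thesis using that unfolding R_def graph_iso_giso by auto
    qed
    then show ?thesis by blast
  qed
  define code where "code X = (SOME cl. cl \<in> B \<and> (\<exists>H\<in>X. iso2 H (decL cl)))" for X :: "'a graph set"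
  have codeP: "code X \<in> B \<and> (\<exists>H\<in>X. iso2 H (decL (code X)))" if xq: "X \<in> C // R" for X
  proof -
    obtain G where G: "G \<in> C" "X = R `` {G}" using cls[OF xq] by blast
    have GX: "G \<in> X" using G unfolding R_def graph_iso_giso by (auto intro: giso_refl)
    obtain cl where "cl \<in> B" "iso2 G (decL cl)" using cov G by blast
    then have "\<exists>cl. cl \<in> B \<and> (\<exists>H\<in>X. iso2 H (decL cl))" using GX by blast
    then show ?thesis unfolding code_def by (rule someI_ex)
  qed
  have inj: "inj_on code (C // R)"
  proof (rule inj_onI)
    fix X1 X2 assume x1: "X1 \<in> C // R" and x2: "X2 \<in> C // R" and eq: "code X1 = code X2"
    obtain G1 where G1: "G1 \<in> C" "X1 = R `` {G1}" using cls[OF x1] by blast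
    obtain G2 where G2: "G2 \<in> C" "X2 = R `` {G2}" using cls[OF x2] by blast
    obtain H1 where H1: "H1 \<in> X1" "iso2 H1 (decL (code X1))" using codeP[OF x1] by blast
    obtain H2 where H2: "H2 \<in> X2" "iso2 H2 (decL (code X1))" using codeP[OF x2] eq by auto
    have i12: "giso H1 H2" using iso2_common[OF H1(2) H2(2)] by (simp add: graph_iso_giso)
    have r1: "H1 \<in> C" "giso G1 H1" using H1(1) G1 unfolding R_def graph_iso_giso by auto
    have r2: "H2 \<in> C" "giso G2 H2" using H2(1) G2 unfolding R_def graph_iso_giso by auto
    have "giso H2 G2" using giso_sym[OF wf_within r2(2)] wfC G2(1) by blast
    then have "giso G1 G2" using r1(2) i12 giso_trans by blast
    then show "X1 = X2" using eqc G1 G2 by simp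
  qed
  have sub: "code ` (C // R) \<subseteq> B" using codeP by blast
  have "finite (C // R)" using inj sub fB by (meson finite_imageD finite_subset)
  moreover have "card (C // R) \<le> card B" using card_inj_on_le[OF inj sub fB] .
  ultimately show ?thesis by blast
qed

theorem mainTheorem8:
  fixes d :: nat
  shows "monotone_class (S_class d :: 'a graph set) \<and> tiny_class (S_class d :: 'a graph set)"
proof
  show "monotone_class (S_class d :: 'a graph set)"
    unfolding monotone_class_def using S_iso S_sub by blast
next
  have her: "hereditary_class (S_class d :: 'a graph set)"
    unfolding hereditary_class_def using S_hered by blast
  have cnt: "finite (Cn // {(G, H). G \<in> Cn \<and> H \<in> Cn \<and> graph_iso G H}) \<and>
        real (card (Cn // {(G, H). G \<in> Cn \<and> H \<in> Cn \<and> graph_iso G H})) \<le> real (2 * BB d) ^ n"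
    if Cn_def: "Cn = {G \<in> (S_class d :: 'a graph set). card (verts G) = n}" for n Cn
  proof -
    have wfC: "\<forall>G\<in>Cn. wf_graph G" using Cn_def by (simp add: S_class_def)
    have cov: "\<forall>G\<in>Cn. \<exists>cl\<in>CLs d n. iso2 G (decL cl)" using main_code[of d n] Cn_def by blast
    have fB: "finite (CLs d n)" and cB: "card (CLs d n) \<le> (2 * BB d) ^ n" using CLs_bound[of d n] by auto
    have q: "finite (Cn // {(G, H). G \<in> Cn \<and> H \<in> Cn \<and> graph_iso G H}) \<and>
        card (Cn // {(G, H). G \<in> Cn \<and> H \<in> Cn \<and> graph_iso G H}) \<le> card (CLs d n)"
      using quot_count[OF wfC cov fB] by simp
    then have "card (Cn // {(G, H). G \<in> Cn \<and> H \<in> Cn \<and> graph_iso G H}) \<le> (2 * BB d) ^ n" using cB by linarith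
    then have "real (card (Cn // {(G, H). G \<in> Cn \<and> H \<in> Cn \<and> graph_iso G H})) \<le> real ((2 * BB d) ^ n)"
      by (simp only: of_nat_le_iff)
    then show ?thesis using q by simp
  qed
  show "tiny_class (S_class d :: 'a graph set)"
    unfolding tiny_class_def Let_def
    using her cnt by blast
qed

end
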